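(* Write $M=\{f=1\}$ and $M^*=\{f^*=1\}$ for positively 1-homogeneous functions $f,f^*:\mathbb{R}^{2d}\to\mathbb{R}$. For a point $x$ in the exterior of both $M$ and $M^*$ we have $-n_+(x)=R^*\left(\frac{x}{f^*(x)}\right)$ and $-n_-(x)=R^*\left(\frac{-x}{f^*(-x)}\right)$.
   Context: Work in $\mathbb{R}^{2d}$ with its standard symplectic form $\omega$. Let $M\subset\mathbb{R}^{2d}$ be a smooth hypersurface bounding a quadratically convex domain containing the origin in its interior. For $x\in M$, $R(x)$ is the unique vector with $\omega(v,R(x))=0$ for all $v\in T_xM$ and $\omega(x,R(x))=1$ (the Reeb vector field); $M^*=R(M)$ is the symplectic polar of $M$, and $R^*$ is the corresponding Reeb map for $M^*$ (defined in the same way with $M^*$ in place of $M$). Write $a\sim b$ if the vectors $a,b$ are proportional with a positive coefficient. For $x$ in the exterior of $M$, $n_-(x)\in M$ and $n_+(x)\in M$ denote the unique points with $R(n_-(x))\sim -x$ and $R(n_+(x))\sim x$ (explicitly $n_\pm(x)=G^{-1}(\mp Jx/|x|)$, where $G$ is the outward normal Gauss map of $M$ and $J$ is multiplication by $\sqrt{-1}$ under $\mathbb{R}^{2d}=\mathbb{C}^d$). It is known that $R^*\circ R=-\mathrm{id}_M$. *)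

theory Defs
  imports "HOL-Analysis.Analysis"
begin

text \<open>Ambient space: R^{2d} identified with C^d, realised as the type complex^'d
  (a euclidean space whose inner product is the real part of the Hermitian product).\<close>

definition cJ :: "complex ^ 'd \<Rightarrow> complex ^ 'd" where
  "cJ x = (\<chi> i. \<i> * (x $ i))"

text \<open>Standard symplectic form: omega(u,v) = <Ju, v>  (= sum dx_j /\ dy_j).\<close>
definition omega :: "complex ^ 'd \<Rightarrow> complex ^ 'd \<Rightarrow> real" where
  "omega u v = inner (cJ u) v"

definition pos_prop :: "'a::real_vector \<Rightarrow> 'a \<Rightarrow> bool" where
  "pos_prop a b \<longleftrightarrow> (\<exists>c>0. a = c *\<^sub>R b)"

definition tangent_space :: "'a::real_normed_vector set \<Rightarrow> 'a \<Rightarrow> 'a set" where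
  "tangent_space S x = {v. \<exists>\<gamma> e. e > 0 \<and> (\<forall>t\<in>{-e<..<e}. \<gamma> t \<in> S) \<and> \<gamma> 0 = x
        \<and> (\<gamma> has_vector_derivative v) (at 0)}"

definition reeb :: "(complex ^ 'd) set \<Rightarrow> complex ^ 'd \<Rightarrow> complex ^ 'd" where
  "reeb S x = (THE r. (\<forall>v\<in>tangent_space S x. omega v r = 0) \<and> omega x r = 1)"

definition n_plus :: "(complex ^ 'd) set \<Rightarrow> complex ^ 'd \<Rightarrow> complex ^ 'd" where
  "n_plus M x = (THE p. p \<in> M \<and> pos_prop (reeb M p) x)"

definition n_minus :: "(complex ^ 'd) set \<Rightarrow> complex ^ 'd \<Rightarrow> complex ^ 'd" where
  "n_minus M x = (THE p. p \<in> M \<and> pos_prop (reeb M p) (- x))"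

coinductive smooth_on :: "'a::euclidean_space set \<Rightarrow> ('a \<Rightarrow> real) \<Rightarrow> bool" where
  "\<lbrakk> continuous_on S f; \<forall>x\<in>S. f differentiable (at x);
     \<forall>v. smooth_on S (\<lambda>x. frechet_derivative f (at x) v) \<rbrakk> \<Longrightarrow> smooth_on S f"

definition hess :: "('a::euclidean_space \<Rightarrow> real) \<Rightarrow> 'a \<Rightarrow> 'a \<Rightarrow> real" where
  "hess f x v = frechet_derivative (\<lambda>y. frechet_derivative f (at y) v) (at x) v"

text \<open>f is the gauge (positively 1-homogeneous, positive off 0) of a smooth
  quadratically convex hypersurface {f = 1} bounding a domain containing 0 in its
  interior: f smooth away from 0 and its Hessian is positive definite on the tangent
  spaces of the level set {f = 1} (i.e. the second fundamental form is positive definite).\<close>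
definition pos_hom1 :: "('a::real_vector \<Rightarrow> real) \<Rightarrow> bool" where
  "pos_hom1 f \<longleftrightarrow> (\<forall>t>0. \<forall>x. f (t *\<^sub>R x) = t * f x)"

definition qconvex_gauge :: "('a::euclidean_space \<Rightarrow> real) \<Rightarrow> bool" where
  "qconvex_gauge f \<longleftrightarrow> pos_hom1 f \<and> (\<forall>x. x \<noteq> 0 \<longrightarrow> f x > 0) \<and> smooth_on (- {0}) f
     \<and> (\<forall>x v. f x = 1 \<and> v \<noteq> 0 \<and> frechet_derivative f (at x) v = 0 \<longrightarrow> hess f x v > 0)"

end

theory Submission
  imports Defs
begin


lemma cJ_add: "cJ (a + b) = cJ a + cJ b"
  unfolding cJ_def by (simp add: vec_eq_iff distrib_left)
lemma cJ_scale: "cJ (c *\<^sub>R a) = c *\<^sub>R cJ a"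
  unfolding cJ_def by (simp add: vec_eq_iff scaleR_conv_of_real)
lemma cJ_minus: "cJ (- a) = - cJ a"
  unfolding cJ_def by (simp add: vec_eq_iff)
lemma cJ_cJ: "cJ (cJ a) = - a"
  unfolding cJ_def by (simp add: vec_eq_iff)
lemma inner_cJ_cJ: "inner (cJ a) (cJ b) = inner a b"
  unfolding cJ_def inner_vec_def by (simp add: inner_complex_def algebra_simps)
lemma inner_cJ_left: "inner (cJ a) b = - inner a (cJ b)"
  unfolding cJ_def inner_vec_def by (simp add: inner_complex_def algebra_simps sum_negf[symmetric])
lemma linear_cJ: "linear cJ"
  by (rule linearI) (simp_all add: cJ_add cJ_scale)
lemma bounded_linear_cJ: "bounded_linear cJ"
  using linear_cJ linear_conv_bounded_linear by blast

lemma smooth_onD: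
  assumes "smooth_on S f"
  shows "continuous_on S f" "\<And>x. x \<in> S \<Longrightarrow> f differentiable (at x)"
    "\<And>v. smooth_on S (\<lambda>x. frechet_derivative f (at x) v)"
  using assms by (cases rule: smooth_on.cases, auto)+




locale gauge =
  fixes f :: "complex ^ 'd \<Rightarrow> real"
  assumes qg: "qconvex_gauge f"
begin

definition L where "L y = frechet_derivative f (at y)"
definition D2 where "D2 y v = frechet_derivative (\<lambda>z. L z v) (at y)"

lemma hom: "t > 0 \<Longrightarrow> f (t *\<^sub>R y) = t * f y"
  using qg unfolding qconvex_gauge_def pos_hom1_def by blast
lemma f0: "f 0 = 0"
  using hom[of 2 0] by simp
lemma fpos: "y \<noteq> 0 \<Longrightarrow> f y > 0"
  using qg unfolding qconvex_gauge_def by blast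
lemma fge: "f y \<ge> 0"
  using fpos f0 by (cases "y = 0") (auto intro: less_imp_le)
lemma smooth: "smooth_on (- {0}) f"
  using qg unfolding qconvex_gauge_def by blast
lemma posdef: "f x = 1 \<Longrightarrow> v \<noteq> 0 \<Longrightarrow> L x v = 0 \<Longrightarrow> D2 x v v > 0"
  using qg unfolding qconvex_gauge_def hess_def L_def D2_def by blast

lemma fder: "y \<noteq> 0 \<Longrightarrow> (f has_derivative L y) (at y)"
  unfolding L_def using smooth_onD(2)[OF smooth] frechet_derivative_works by auto

lemma fcont: "continuous_on (- {0}) f"
  using smooth_onD(1)[OF smooth] .

lemma linL: "y \<noteq> 0 \<Longrightarrow> linear (L y)"
  using fder has_derivative_linear by blast

lemma Lder: "y \<noteq> 0 \<Longrightarrow> ((\<lambda>z. L z v) has_derivative D2 y v) (at y)"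
proof -
  assume y: "y \<noteq> 0"
  have "smooth_on (- {0}) (\<lambda>z. L z v)"
    unfolding L_def using smooth_onD(3)[OF smooth] .
  then have "(\<lambda>z. L z v) differentiable (at y)" using smooth_onD(2) y by auto
  then show ?thesis unfolding D2_def using frechet_derivative_works by auto
qed

lemma linD2: "y \<noteq> 0 \<Longrightarrow> linear (D2 y v)"
  using Lder has_derivative_linear by blast

lemma euler: "y \<noteq> 0 \<Longrightarrow> L y y = f y"
proof -
  assume y: "y \<noteq> 0"
  have d1: "((\<lambda>t. t *\<^sub>R y) has_derivative (\<lambda>h. h *\<^sub>R y)) (at (1::real))"
    by (auto intro!: derivative_eq_intros)
  have "((f \<circ> (\<lambda>t. t *\<^sub>R y)) has_derivative (L y \<circ> (\<lambda>h. h *\<^sub>R y))) (at (1::real))"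
    by (rule diff_chain_at[OF d1]) (simp add: fder y)
  then have a: "((\<lambda>t. f (t *\<^sub>R y)) has_derivative (\<lambda>h. L y (h *\<^sub>R y))) (at (1::real))"
    by (simp add: o_def)
  have "((\<lambda>t. t * f y) has_derivative (\<lambda>h. h * f y)) (at (1::real))"
    by (auto intro!: derivative_eq_intros)
  then have b: "((\<lambda>t. f (t *\<^sub>R y)) has_derivative (\<lambda>h. h * f y)) (at (1::real))"
    by (rule has_derivative_transform_within_open[where s="{0<..}"]) (auto simp: hom)
  have "(\<lambda>h. L y (h *\<^sub>R y)) = (\<lambda>h. h * f y)"
    using has_derivative_unique[OF a b] .
  then show ?thesis by (metis mult_1 scaleR_one)
qed

lemma L_hom: "y \<noteq> 0 \<Longrightarrow> t > 0 \<Longrightarrow> L (t *\<^sub>R y) = L y"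
proof -
  assume y: "y \<noteq> 0" and t: "t > 0"
  have ty: "t *\<^sub>R y \<noteq> 0" using y t by simp
  have d1: "((\<lambda>z. t *\<^sub>R z) has_derivative (\<lambda>h. t *\<^sub>R h)) (at y)"
    by (auto intro!: derivative_eq_intros)
  have "((f \<circ> (\<lambda>z. t *\<^sub>R z)) has_derivative (L (t *\<^sub>R y) \<circ> (\<lambda>h. t *\<^sub>R h))) (at y)"
    by (rule diff_chain_at[OF d1]) (rule fder[OF ty])
  then have a: "((\<lambda>z. f (t *\<^sub>R z)) has_derivative (\<lambda>h. L (t *\<^sub>R y) (t *\<^sub>R h))) (at y)"
    by (simp add: o_def)
  have "((\<lambda>z. t * f z) has_derivative (\<lambda>h. t * L y h)) (at y)"
    by (auto intro!: derivative_eq_intros fder y)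
  then have b: "((\<lambda>z. f (t *\<^sub>R z)) has_derivative (\<lambda>h. t * L y h)) (at y)"
    by (simp add: hom t)
  have e: "(\<lambda>h. L (t *\<^sub>R y) (t *\<^sub>R h)) = (\<lambda>h. t * L y h)"
    using has_derivative_unique[OF a b] .
  show ?thesis
  proof
    fix h
    have "t * L (t *\<^sub>R y) h = t * L y h"
      using fun_cong[OF e, of h] linear_cmul[OF linL[OF ty]] by simp
    then show "L (t *\<^sub>R y) h = L y h" using t by simp
  qed
qed

end



lemma lin_rep:
  fixes l :: "'a::euclidean_space \<Rightarrow> real"
  assumes "linear l"
  shows "l v = (\<Sum>b\<in>Basis. (v \<bullet> b) * l b)"
proof -
  have "l v = l (\<Sum>b\<in>Basis. (v \<bullet> b) *\<^sub>R b)" by (simp add: euclidean_representation)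
  also have "\<dots> = (\<Sum>b\<in>Basis. (v \<bullet> b) * l b)"
    using assms by (simp add: linear_sum linear_scale)
  finally show ?thesis .
qed

context gauge
begin

lemma D2_ray: "y \<noteq> 0 \<Longrightarrow> D2 y v y = 0"
proof -
  assume y: "y \<noteq> 0"
  have d1: "((\<lambda>t. t *\<^sub>R y) has_derivative (\<lambda>h. h *\<^sub>R y)) (at (1::real))"
    by (auto intro!: derivative_eq_intros)
  have "(((\<lambda>z. L z v) \<circ> (\<lambda>t. t *\<^sub>R y)) has_derivative (D2 y v \<circ> (\<lambda>h. h *\<^sub>R y))) (at (1::real))"
    by (rule diff_chain_at[OF d1]) (simp add: Lder y)
  then have a: "((\<lambda>t. L (t *\<^sub>R y) v) has_derivative (\<lambda>h. D2 y v (h *\<^sub>R y))) (at (1::real))"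
    by (simp add: o_def)
  have "((\<lambda>t. L y v) has_derivative (\<lambda>h. 0)) (at (1::real))"
    by (auto intro!: derivative_eq_intros)
  then have b: "((\<lambda>t. L (t *\<^sub>R y) v) has_derivative (\<lambda>h. 0)) (at (1::real))"
    by (rule has_derivative_transform_within_open[where s="{0<..}"]) (auto simp: L_hom y)
  show ?thesis using fun_cong[OF has_derivative_unique[OF a b], of 1] by simp
qed

lemma D2_scale: "y \<noteq> 0 \<Longrightarrow> t > 0 \<Longrightarrow> D2 (t *\<^sub>R y) v u = D2 y v u / t"
proof -
  assume y: "y \<noteq> 0" and t: "t > 0"
  have ty: "t *\<^sub>R y \<noteq> 0" using y t by simp
  have d1: "((\<lambda>z. t *\<^sub>R z) has_derivative (\<lambda>h. t *\<^sub>R h)) (at y)"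
    by (auto intro!: derivative_eq_intros)
  have "(((\<lambda>z. L z v) \<circ> (\<lambda>z. t *\<^sub>R z)) has_derivative (D2 (t *\<^sub>R y) v \<circ> (\<lambda>h. t *\<^sub>R h))) (at y)"
    by (rule diff_chain_at[OF d1]) (rule Lder[OF ty])
  then have a: "((\<lambda>z. L (t *\<^sub>R z) v) has_derivative (\<lambda>h. D2 (t *\<^sub>R y) v (t *\<^sub>R h))) (at y)"
    by (simp add: o_def)
  have b: "((\<lambda>z. L (t *\<^sub>R z) v) has_derivative D2 y v) (at y)"
    by (rule has_derivative_transform_within_open[OF Lder[OF y], where s="- {0}"])
       (auto simp: L_hom t y)
  have "D2 (t *\<^sub>R y) v (t *\<^sub>R u) = D2 y v u"
    using fun_cong[OF has_derivative_unique[OF a b], of u] by simp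
  then have "t * D2 (t *\<^sub>R y) v u = D2 y v u"
    using linear_cmul[OF linD2[OF ty]] by simp
  then show ?thesis using t by (simp add: field_simps)
qed

lemma L_rep: "z \<noteq> 0 \<Longrightarrow> L z v = (\<Sum>b\<in>Basis. (v \<bullet> b) * L z b)"
  using lin_rep[OF linL] by blast

lemma D2_rep: "y \<noteq> 0 \<Longrightarrow> D2 y v u = (\<Sum>b\<in>Basis. (v \<bullet> b) * D2 y b u)"
proof -
  assume y: "y \<noteq> 0"
  have "((\<lambda>z. \<Sum>b\<in>Basis. (v \<bullet> b) * L z b) has_derivative (\<lambda>h. \<Sum>b\<in>Basis. (v \<bullet> b) * D2 y b h)) (at y)"
    by (auto intro!: derivative_eq_intros Lder y)
  then have "((\<lambda>z. L z v) has_derivative (\<lambda>h. \<Sum>b\<in>Basis. (v \<bullet> b) * D2 y b h)) (at y)"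
    by (rule has_derivative_transform_within_open[where s="- {0}"]) (auto simp: L_rep y)
  from fun_cong[OF has_derivative_unique[OF Lder[OF y] this]] show ?thesis .
qed

lemma D2_add: "y \<noteq> 0 \<Longrightarrow> D2 y (v + w) u = D2 y v u + D2 y w u"
  by (simp add: D2_rep[of y] inner_add_left distrib_right sum.distrib)

lemma D2_cmul: "y \<noteq> 0 \<Longrightarrow> D2 y (c *\<^sub>R v) u = c * D2 y v u"
  by (simp add: D2_rep[of y] sum_distrib_left mult.assoc)

lemma D2_euler: "y \<noteq> 0 \<Longrightarrow> D2 y y u = 0"
proof -
  assume y: "y \<noteq> 0"
  have "((\<lambda>z. \<Sum>b\<in>Basis. (z \<bullet> b) * L z b) has_derivative
      (\<lambda>h. \<Sum>b\<in>Basis. (y \<bullet> b) * D2 y b h + (h \<bullet> b) * L y b)) (at y)"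
    by (auto intro!: derivative_eq_intros Lder y)
  then have "(f has_derivative (\<lambda>h. \<Sum>b\<in>Basis. (y \<bullet> b) * D2 y b h + (h \<bullet> b) * L y b)) (at y)"
    by (rule has_derivative_transform_within_open[where s="- {0}"])
       (auto simp: L_rep[symmetric] euler y)
  from fun_cong[OF has_derivative_unique[OF fder[OF y] this], of u]
  have "L y u = (\<Sum>b\<in>Basis. (u \<bullet> b) * L y b) + (\<Sum>b\<in>Basis. (y \<bullet> b) * D2 y b u)"
    by (simp add: sum.distrib)
  then show ?thesis using L_rep[OF y, of u] D2_rep[OF y, of y u] by simp
qed

end



context gauge
begin

lemma psd: "y \<noteq> 0 \<Longrightarrow> D2 y w w \<ge> 0"
proof -
  assume y: "y \<noteq> 0"
  have fy: "f y > 0" using fpos y .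
  define a where "a = L y w / f y"
  define u where "u = w - a *\<^sub>R y"
  have lin: "linear (L y)" using linL y .
  have Lu: "L y u = 0"
    unfolding u_def using linear_diff[OF lin] linear_cmul[OF lin] euler[OF y] fy
    by (simp add: a_def)
  have w: "w = a *\<^sub>R y + u" unfolding u_def by simp
  have "D2 y w w = a * D2 y y w + D2 y u w"
    by (subst (1) w) (simp add: D2_add D2_cmul y)
  also have "\<dots> = D2 y u w" by (simp add: D2_euler y)
  also have "\<dots> = a * D2 y u y + D2 y u u"
    by (subst (1) w) (simp add: linear_add[OF linD2[OF y]] linear_cmul[OF linD2[OF y]])
  also have "\<dots> = D2 y u u" by (simp add: D2_ray y)
  finally have e1: "D2 y w w = D2 y u u" .
  define m where "m = (1 / f y) *\<^sub>R y"
  have m0: "m \<noteq> 0" using y fy by (simp add: m_def)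
  have fm: "f m = 1" using fy by (simp add: m_def hom)
  have ym: "y = f y *\<^sub>R m" using fy by (simp add: m_def)
  have e2: "D2 y u u = D2 m u u / f y"
    by (subst ym) (rule D2_scale[OF m0 fy])
  have Lm: "L m u = 0" using Lu L_hom[OF y, of "1 / f y"] fy by (simp add: m_def)
  have "D2 m u u \<ge> 0"
  proof (cases "u = 0")
    case True then show ?thesis using linear_0[OF linD2[OF m0]] by simp
  next
    case False then show ?thesis using posdef[OF fm False Lm] by simp
  qed
  then show ?thesis using e1 e2 fy by simp
qed

lemma convex_ineq:
  assumes q: "q \<noteq> 0"
  shows "L q p \<le> f p"
proof (cases "\<exists>t\<in>{0..1}. q + t *\<^sub>R (p - q) = 0")
  case True
  then obtain t where t: "0 \<le> t" "t \<le> 1" "q + t *\<^sub>R (p - q) = 0" by auto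
  have t0: "t \<noteq> 0" using t q by auto
  have "t *\<^sub>R p = - ((1 - t) *\<^sub>R q)" using t(3) by (simp add: algebra_simps)
  then have "p = - (((1 - t) / t) *\<^sub>R q)" using t0
    by (metis (no_types, lifting) divide_inverse_commute eq_vector_fraction_iff scaleR_minus_right scaleR_scaleR)
  then have "L q p = - (((1 - t) / t) * L q q)"
    using linear_neg[OF linL[OF q]] linear_cmul[OF linL[OF q]] by simp
  also have "\<dots> = - (((1 - t) / t) * f q)" by (simp add: euler q)
  also have "\<dots> \<le> 0" using t fge[of q] by simp
  also have "0 \<le> f p" by (rule fge)
  finally show ?thesis .
next
  case False
  define w where "w = p - q"
  define c where "c t = q + t *\<^sub>R w" for t :: real
  have c0: "t \<in> {0..1} \<Longrightarrow> c t \<noteq> 0" for t using False by (auto simp: c_def w_def)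
  have cd: "(c has_derivative (\<lambda>h. h *\<^sub>R w)) (at t)" for t
    unfolding c_def by (auto intro!: derivative_eq_intros)
  have hd: "((\<lambda>t. f (c t)) has_derivative (\<lambda>h. L (c t) (h *\<^sub>R w))) (at t)" if "t \<in> {0..1}" for t
    using diff_chain_at[OF cd fder[OF c0[OF that]]] by (simp add: o_def)
  have hD: "DERIV (\<lambda>t. f (c t)) t :> L (c t) w" if "t \<in> {0..1}" for t
  proof -
    have "(\<lambda>h. L (c t) (h *\<^sub>R w)) = (*) (L (c t) w)"
      by (rule ext) (simp add: linear_cmul[OF linL[OF c0[OF that]]])
    then show ?thesis using hd[OF that] by (simp add: has_field_derivative_def)
  qed
  have kd: "((\<lambda>t. L (c t) w) has_derivative (\<lambda>h. D2 (c t) w (h *\<^sub>R w))) (at t)" if "t \<in> {0..1}" for t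
    using diff_chain_at[OF cd Lder[OF c0[OF that]]] by (simp add: o_def)
  have kD: "DERIV (\<lambda>t. L (c t) w) t :> D2 (c t) w w" if "t \<in> {0..1}" for t
  proof -
    have "(\<lambda>h. D2 (c t) w (h *\<^sub>R w)) = (*) (D2 (c t) w w)"
      by (rule ext) (simp add: linear_cmul[OF linD2[OF c0[OF that]]])
    then show ?thesis using kd[OF that] by (simp add: has_field_derivative_def)
  qed
  have mono: "L (c s) w \<le> L (c t) w" if "0 \<le> s" "s \<le> t" "t \<le> 1" for s t
  proof (rule DERIV_nonneg_imp_increasing_open[OF that(2)])
    show "\<exists>y. DERIV (\<lambda>t. L (c t) w) x :> y \<and> 0 \<le> y" if "s < x" "x < t" for x
      using that \<open>0 \<le> s\<close> \<open>t \<le> 1\<close> by (intro exI[of _ "D2 (c x) w w"]) (auto intro!: kD psd c0)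
    show "continuous_on {s..t} (\<lambda>t. L (c t) w)"
      using kD that by (meson DERIV_continuous atLeastAtMost_iff continuous_at_imp_continuous_on order_trans)
  qed
  have "continuous_on {0..1} (\<lambda>t. f (c t))"
    using hD by (meson DERIV_continuous continuous_at_imp_continuous_on)
  then obtain l z where z: "0 < z" "z < 1" "DERIV (\<lambda>t. f (c t)) z :> l"
     "f (c 1) - f (c 0) = (1 - 0) * l"
    using MVT[of 0 1 "\<lambda>t. f (c t)"] hD real_differentiable_def
    by (metis atLeastAtMost_iff less_eq_real_def zero_less_one)
  have "l = L (c z) w" using DERIV_unique[OF z(3) hD] z by auto
  then have "f p - f q \<ge> L q w" using mono[of 0 z] z by (simp add: c_def w_def)
  moreover have "L q w = L q p - f q"
    unfolding w_def using linear_diff[OF linL[OF q]] euler[OF q] by simp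
  ultimately show ?thesis by simp
qed

end



context gauge
begin

definition Ms where "Ms = {y. f y = 1}"
definition grad where "grad y = (\<Sum>b\<in>Basis. L y b *\<^sub>R b)"

lemma Ms_nz: "q \<in> Ms \<Longrightarrow> q \<noteq> 0"
  using f0 by (auto simp: Ms_def)

lemma inner_grad: "y \<noteq> 0 \<Longrightarrow> inner (grad y) v = L y v"
proof -
  assume y: "y \<noteq> 0"
  have "inner (grad y) v = (\<Sum>b\<in>Basis. L y b * inner b v)" by (simp add: grad_def inner_sum_left)
  also have "\<dots> = (\<Sum>b\<in>Basis. inner v b * L y b)"
    by (rule sum.cong) (auto simp: inner_commute[of b v for b])
  also have "\<dots> = L y v" using L_rep[OF y, of v] by simp
  finally show ?thesis .
qed

lemma grad_hom: "y \<noteq> 0 \<Longrightarrow> t > 0 \<Longrightarrow> grad (t *\<^sub>R y) = grad y"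
  by (simp add: grad_def L_hom)

lemma curve:
  assumes q: "q \<in> Ms" and u: "L q u = 0"
  defines "c \<equiv> (\<lambda>t::real. (1 / f (q + t *\<^sub>R u)) *\<^sub>R (q + t *\<^sub>R u))"
  shows "\<exists>e>0. \<forall>t\<in>{-e<..<e}. c t \<in> Ms \<and> q + t *\<^sub>R u \<noteq> 0"
    "c 0 = q" "(c has_vector_derivative u) (at 0)"
proof -
  have q0: "q \<noteq> 0" using Ms_nz q .
  have fq: "f q = 1" using q by (simp add: Ms_def)
  define e where "e = norm q / (norm u + 1)"
  have nu: "norm u + 1 > 0" by (smt (verit) norm_ge_zero)
  have e: "e > 0" unfolding e_def using q0 nu by (intro divide_pos_pos) auto
  have nz: "q + t *\<^sub>R u \<noteq> 0" if "\<bar>t\<bar> < e" for t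
  proof
    assume "q + t *\<^sub>R u = 0"
    then have "norm q = \<bar>t\<bar> * norm u" by (metis add_eq_0_iff norm_minus_cancel norm_scaleR)
    also have "\<dots> \<le> \<bar>t\<bar> * (norm u + 1)" by (simp add: mult_left_mono)
    also have "\<dots> < e * (norm u + 1)"
      using mult_strict_right_mono[OF that nu] .
    also have "\<dots> = norm q" using nu by (simp add: e_def)
    finally show False by simp
  qed
  show "\<exists>e>0. \<forall>t\<in>{-e<..<e}. c t \<in> Ms \<and> q + t *\<^sub>R u \<noteq> 0"
  proof (intro exI conjI ballI e)
    fix t assume "t \<in> {-e<..<e}"
    then have t: "\<bar>t\<bar> < e" by auto
    show "q + t *\<^sub>R u \<noteq> 0" using nz[OF t] .
    then show "c t \<in> Ms" using fpos[of "q + t *\<^sub>R u"]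
      by (simp add: c_def Ms_def hom)
  qed (rule e)
  show "c 0 = q" by (simp add: c_def fq)
  have d1: "((\<lambda>t. q + t *\<^sub>R u) has_derivative (\<lambda>h. h *\<^sub>R u)) (at (0::real))"
    by (auto intro!: derivative_eq_intros)
  have "((f \<circ> (\<lambda>t. q + t *\<^sub>R u)) has_derivative (L q \<circ> (\<lambda>h. h *\<^sub>R u))) (at (0::real))"
    by (rule diff_chain_at[OF d1]) (simp add: fder q0)
  then have "((\<lambda>t. f (q + t *\<^sub>R u)) has_derivative (\<lambda>h. 0)) (at (0::real))"
    using linear_cmul[OF linL[OF q0]] u by (simp add: o_def)
  then have fd: "((\<lambda>t. f (q + t *\<^sub>R u)) has_real_derivative 0) (at 0)"
  proof -
    have "(*) (0::real) = (\<lambda>h. 0)" by (rule ext) simp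
    then show ?thesis unfolding has_field_derivative_def using \<open>((\<lambda>t. f (q + t *\<^sub>R u)) has_derivative (\<lambda>h. 0)) (at 0)\<close> by simp
  qed
  have id: "((\<lambda>t. 1 / f (q + t *\<^sub>R u)) has_real_derivative 0) (at 0)"
    using DERIV_inverse_fun[OF fd] fq by (simp add: divide_inverse)
  have vd: "((\<lambda>t. q + t *\<^sub>R u) has_vector_derivative u) (at 0)"
    by (auto intro!: derivative_eq_intros)
  have "(c has_vector_derivative ((1 / f (q + 0 *\<^sub>R u)) *\<^sub>R u + 0 *\<^sub>R (q + 0 *\<^sub>R u))) (at 0)"
    unfolding c_def by (rule has_vector_derivative_scaleR[OF id vd])
  then show "(c has_vector_derivative u) (at 0)" by (simp add: fq)
qed

lemma tangent_M:
  assumes q: "q \<in> Ms"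
  shows "tangent_space Ms q = {v. L q v = 0}"
proof
  have q0: "q \<noteq> 0" using Ms_nz q .
  show "tangent_space Ms q \<subseteq> {v. L q v = 0}"
  proof
    fix v assume "v \<in> tangent_space Ms q"
    then obtain \<gamma> e where g: "e > 0" "\<forall>t\<in>{-e<..<e}. \<gamma> t \<in> Ms" "\<gamma> 0 = q"
      "(\<gamma> has_vector_derivative v) (at 0)"
      unfolding tangent_space_def by blast
    have gd: "(\<gamma> has_derivative (\<lambda>h. h *\<^sub>R v)) (at 0)"
      using g(4) by (simp add: has_vector_derivative_def)
    have "((f \<circ> \<gamma>) has_derivative (L q \<circ> (\<lambda>h. h *\<^sub>R v))) (at 0)"
      by (rule diff_chain_at[OF gd]) (simp add: g(3) fder q0)
    then have a: "((\<lambda>t. f (\<gamma> t)) has_derivative (\<lambda>h. L q (h *\<^sub>R v))) (at 0)"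
      by (simp add: o_def)
    have "((\<lambda>t. 1::real) has_derivative (\<lambda>h. 0)) (at (0::real))"
      by (auto intro!: derivative_eq_intros)
    then have b: "((\<lambda>t. f (\<gamma> t)) has_derivative (\<lambda>h. 0)) (at 0)"
      by (rule has_derivative_transform_within_open[where s="{-e<..<e}"])
         (use g in \<open>auto simp: Ms_def\<close>)
    show "v \<in> {v. L q v = 0}"
      using fun_cong[OF has_derivative_unique[OF a b], of 1] by simp
  qed
  show "{v. L q v = 0} \<subseteq> tangent_space Ms q"
  proof
    fix v assume "v \<in> {v. L q v = 0}"
    then have v: "L q v = 0" by simp
    note cv = curve[OF q v]
    from cv(1) obtain e where e: "e > 0" "\<forall>t\<in>{-e<..<e}. (1 / f (q + t *\<^sub>R v)) *\<^sub>R (q + t *\<^sub>R v) \<in> Ms"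
      by blast
    show "v \<in> tangent_space Ms q"
      unfolding tangent_space_def
      by (intro CollectI exI[of _ "\<lambda>t. (1 / f (q + t *\<^sub>R v)) *\<^sub>R (q + t *\<^sub>R v)"] exI[of _ e] conjI e cv(2,3))
  qed
qed

end


context gauge
begin

lemma reeb_M:
  assumes q: "q \<in> Ms"
  shows "reeb Ms q = cJ (grad q)"
proof -
  have q0: "q \<noteq> 0" using Ms_nz q .
  have fq: "f q = 1" using q by (simp add: Ms_def)
  have lin: "linear (L q)" using linL q0 .
  show ?thesis
    unfolding reeb_def tangent_M[OF q]
  proof (rule the_equality)
    show "(\<forall>v\<in>{v. L q v = 0}. omega v (cJ (grad q)) = 0) \<and> omega q (cJ (grad q)) = 1"
    proof -
      have "omega v (cJ (grad q)) = L q v" for v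
        unfolding omega_def inner_cJ_cJ by (metis inner_commute inner_grad q0)
      then show ?thesis using euler[OF q0] fq by simp
    qed
  next
    fix r assume r: "(\<forall>v\<in>{v. L q v = 0}. omega v r = 0) \<and> omega q r = 1"
    define g where "g = grad q"
    define uu where "uu = cJ r + g"
    have k: "inner v (cJ r) = 0" if "L q v = 0" for v
      using r that by (auto simp: omega_def inner_cJ_left)
    have qr: "inner q (cJ r) = -1" using r by (simp add: omega_def inner_cJ_left)
    have ig: "inner v g = L q v" for v
      unfolding g_def by (metis inner_commute inner_grad q0)
    have "inner z uu = 0" for z
    proof -
      have Lz: "L q (z - L q z *\<^sub>R q) = 0"
        using linear_diff[OF lin] linear_cmul[OF lin] euler[OF q0] fq by simp
      have "inner z uu = inner (z - L q z *\<^sub>R q) uu + L q z * inner q uu"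
        by (simp add: inner_diff_left)
      also have "inner (z - L q z *\<^sub>R q) uu = 0"
        unfolding uu_def inner_add_right using k[OF Lz] ig Lz by simp
      also have "inner q uu = 0"
        unfolding uu_def inner_add_right using qr ig euler[OF q0] fq by simp
      finally show ?thesis by simp
    qed
    then have "uu = 0" by (metis inner_eq_zero_iff)
    then have "cJ r = - g" by (simp add: uu_def eq_neg_iff_add_eq_0)
    then have "cJ (cJ r) = cJ (- g)" by simp
    then show "r = cJ (grad q)" by (simp add: cJ_cJ cJ_minus g_def)
  qed
qed

end



context gauge
begin

definition H where "H y u = (\<Sum>b\<in>Basis. D2 y b u *\<^sub>R b)"
definition Mst where "Mst = reeb Ms ` Ms"

lemma inner_H: "y \<noteq> 0 \<Longrightarrow> inner (H y u) r = D2 y r u"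
proof -
  assume y: "y \<noteq> 0"
  have "inner (H y u) r = (\<Sum>b\<in>Basis. D2 y b u * inner b r)" by (simp add: H_def inner_sum_left)
  also have "\<dots> = (\<Sum>b\<in>Basis. inner r b * D2 y b u)"
    by (rule sum.cong) (auto simp: inner_commute[of b r for b])
  also have "\<dots> = D2 y r u" using D2_rep[OF y, of r u] by simp
  finally show ?thesis .
qed

lemma ray_deriv: "y \<noteq> 0 \<Longrightarrow> ((\<lambda>t. L (y + t *\<^sub>R u) v) has_real_derivative D2 y v u) (at 0)"
proof -
  assume y: "y \<noteq> 0"
  have d1: "((\<lambda>t. y + t *\<^sub>R u) has_derivative (\<lambda>h. h *\<^sub>R u)) (at (0::real))"
    by (auto intro!: derivative_eq_intros)
  have "(((\<lambda>z. L z v) \<circ> (\<lambda>t. y + t *\<^sub>R u)) has_derivative (D2 y v \<circ> (\<lambda>h. h *\<^sub>R u))) (at (0::real))"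
    by (rule diff_chain_at[OF d1]) (simp add: Lder y)
  then have a: "((\<lambda>t. L (y + t *\<^sub>R u) v) has_derivative (\<lambda>h. D2 y v (h *\<^sub>R u))) (at 0)"
    by (simp add: o_def)
  have "(\<lambda>h. D2 y v (h *\<^sub>R u)) = (*) (D2 y v u)"
    by (rule ext) (simp add: linear_cmul[OF linD2[OF y]])
  then show ?thesis using a by (simp add: has_field_derivative_def)
qed

lemma grad_deriv: "y \<noteq> 0 \<Longrightarrow> ((\<lambda>t. grad (y + t *\<^sub>R u)) has_vector_derivative H y u) (at 0)"
proof -
  assume y: "y \<noteq> 0"
  have "((\<lambda>t. \<Sum>b\<in>Basis. L (y + t *\<^sub>R u) b *\<^sub>R b) has_vector_derivative
         (\<Sum>b\<in>Basis. L (y + 0 *\<^sub>R u) b *\<^sub>R 0 + D2 y b u *\<^sub>R b)) (at 0)"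
    by (intro has_vector_derivative_sum has_vector_derivative_scaleR ray_deriv y has_vector_derivative_const)
  then show ?thesis by (simp add: grad_def H_def)
qed

lemma omega_reeb: "q \<in> Ms \<Longrightarrow> omega (reeb Ms q) p = - L q p"
  using Ms_nz[of q] by (simp add: reeb_M omega_def cJ_cJ inner_grad)

lemma reeb_star:
  assumes p: "p \<in> Ms"
  shows "reeb Mst (reeb Ms p) = - p"
proof -
  have p0: "p \<noteq> 0" using Ms_nz p .
  have fp: "f p = 1" using p by (simp add: Ms_def)
  have linp: "linear (L p)" using linL p0 .
  show ?thesis
    unfolding reeb_def[of Mst]
  proof (rule the_equality)
    have A: "omega v (- p) = 0" if vT: "v \<in> tangent_space Mst (reeb Ms p)" for v
    proof -
    obtain \<gamma> e where g: "e > 0" "\<forall>t\<in>{-e<..<e}. \<gamma> t \<in> Mst" "\<gamma> 0 = reeb Ms p"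
      "(\<gamma> has_vector_derivative v) (at 0)"
      using vT unfolding tangent_space_def by blast
    have bl: "bounded_linear (\<lambda>x. inner (cJ x) p)"
      using bounded_linear_compose[OF bounded_linear_inner_left[of p] bounded_linear_cJ] by (simp add: o_def)
    have "((\<lambda>t. inner (cJ (\<gamma> t)) p) has_real_derivative inner (cJ v) p) (at 0)"
      unfolding has_real_derivative_iff_has_vector_derivative
      by (rule bounded_linear.has_vector_derivative[OF bl g(4)])
    moreover have "\<forall>y. \<bar>0 - y\<bar> < e \<longrightarrow> inner (cJ (\<gamma> 0)) p \<le> inner (cJ (\<gamma> y)) p"
    proof (intro allI impI)
      fix y :: real assume "\<bar>0 - y\<bar> < e"
      then have "\<gamma> y \<in> Mst" using g(2) by (auto simp: abs_less_iff)
      then obtain q where q: "q \<in> Ms" "\<gamma> y = reeb Ms q" unfolding Mst_def by auto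
      have "inner (cJ (\<gamma> y)) p = - L q p" using omega_reeb[OF q(1)] q(2) by (simp add: omega_def)
      also have "- L q p \<ge> - f p" using convex_ineq[OF Ms_nz[OF q(1)]] by simp
      finally have "inner (cJ (\<gamma> y)) p \<ge> -1" using fp by simp
      moreover have "inner (cJ (\<gamma> 0)) p = -1"
        using omega_reeb[OF p] g(3) euler[OF p0] fp by (simp add: omega_def)
      ultimately show "inner (cJ (\<gamma> 0)) p \<le> inner (cJ (\<gamma> y)) p" by simp
    qed
    ultimately have "inner (cJ v) p = 0" using DERIV_local_min g(1) by blast
    then show "omega v (- p) = 0" by (simp add: omega_def)
    qed
    have B: "omega (reeb Ms p) (- p) = 1"
      using omega_reeb[OF p] linear_neg[OF linp] euler[OF p0] fp by simp
    show "(\<forall>v\<in>tangent_space Mst (reeb Ms p). omega v (- p) = 0) \<and> omega (reeb Ms p) (- p) = 1"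
      using A B by blast
  next
    fix r assume r: "(\<forall>v\<in>tangent_space Mst (reeb Ms p). omega v r = 0) \<and> omega (reeb Ms p) r = 1"
    have Lr: "L p r = -1" using r omega_reeb[OF p] by simp
    have D2r: "D2 p r u = 0" if u: "L p u = 0" for u
    proof -
      note cv = curve[OF p u]
      from cv(1) obtain e where e: "e > 0"
        "\<forall>t\<in>{-e<..<e}. (1 / f (p + t *\<^sub>R u)) *\<^sub>R (p + t *\<^sub>R u) \<in> Ms \<and> p + t *\<^sub>R u \<noteq> 0"
        by blast
      define \<gamma> where "\<gamma> t = cJ (grad (p + t *\<^sub>R u))" for t
      have "\<gamma> t \<in> Mst" if t: "t \<in> {-e<..<e}" for t
      proof -
        let ?c = "(1 / f (p + t *\<^sub>R u)) *\<^sub>R (p + t *\<^sub>R u)"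
        have cM: "?c \<in> Ms" and nz: "p + t *\<^sub>R u \<noteq> 0" using e(2) t by auto
        have "grad ?c = grad (p + t *\<^sub>R u)"
          using grad_hom[OF nz] fpos[OF nz] by simp
        then have "\<gamma> t = reeb Ms ?c" using reeb_M[OF cM] by (simp add: \<gamma>_def)
        then show ?thesis using cM by (simp add: Mst_def)
      qed
      moreover have "\<gamma> 0 = reeb Ms p" by (simp add: \<gamma>_def reeb_M p)
      moreover have "(\<gamma> has_vector_derivative cJ (H p u)) (at 0)"
        unfolding \<gamma>_def by (rule bounded_linear.has_vector_derivative[OF bounded_linear_cJ grad_deriv[OF p0]])
      ultimately have "cJ (H p u) \<in> tangent_space Mst (reeb Ms p)"
        unfolding tangent_space_def using e(1) by blast
      then have "omega (cJ (H p u)) r = 0" using r by blast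
      then show ?thesis by (simp add: omega_def cJ_cJ inner_H p0)
    qed
    define s where "s = r + p"
    have Ls: "L p s = 0" using linear_add[OF linp] Lr euler[OF p0] fp by (simp add: s_def)
    have "D2 p s s = D2 p r s + D2 p p s" by (simp add: s_def D2_add p0)
    also have "\<dots> = 0" using D2r[OF Ls] D2_euler[OF p0] by simp
    finally have "s = 0" using posdef[OF fp _ Ls] by fastforce
    then show "r = - p" by (simp add: s_def eq_neg_iff_add_eq_0)
  qed
qed

end



context gauge
begin

lemma Ms_img: "Ms = (\<lambda>z. (1 / f z) *\<^sub>R z) ` sphere 0 1"
proof
  show "Ms \<subseteq> (\<lambda>z. (1 / f z) *\<^sub>R z) ` sphere 0 1"
  proof
    fix y assume y: "y \<in> Ms"
    have y0: "y \<noteq> 0" using Ms_nz y .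
    have fy: "f y = 1" using y by (simp add: Ms_def)
    let ?z = "(1 / norm y) *\<^sub>R y"
    have "f ?z = 1 / norm y" using y0 fy by (simp add: hom)
    then have "(1 / f ?z) *\<^sub>R ?z = y" using y0 by simp
    moreover have "?z \<in> sphere 0 1" using y0 by simp
    ultimately show "y \<in> (\<lambda>z. (1 / f z) *\<^sub>R z) ` sphere 0 1" by (intro image_eqI[OF sym])
  qed
  show "(\<lambda>z. (1 / f z) *\<^sub>R z) ` sphere 0 1 \<subseteq> Ms"
  proof
    fix y assume "y \<in> (\<lambda>z. (1 / f z) *\<^sub>R z) ` sphere 0 1"
    then obtain z where z: "norm z = 1" "y = (1 / f z) *\<^sub>R z" by auto
    have "z \<noteq> 0" using z by auto
    then have "f z > 0" using fpos by blast
    then show "y \<in> Ms" using z by (simp add: Ms_def hom)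
  qed
qed

lemma Ms_compact: "compact Ms"
proof -
  have "continuous_on (sphere 0 1) f"
    using continuous_on_subset[OF fcont] by auto
  moreover have "\<forall>z\<in>sphere 0 1. f z \<noteq> 0"
  proof
    fix z :: "complex ^ 'd" assume "z \<in> sphere 0 1"
    then have "z \<noteq> 0" by auto
    then show "f z \<noteq> 0" using fpos[of z] by simp
  qed
  ultimately have "continuous_on (sphere 0 1) (\<lambda>z. (1 / f z) *\<^sub>R z)"
    by (auto intro!: continuous_intros)
  then show ?thesis unfolding Ms_img by (rule compact_continuous_image) simp
qed

lemma lagrange:
  assumes w: "w \<noteq> 0"
  shows "\<exists>q\<in>Ms. \<exists>c>0. w = c *\<^sub>R grad q"
proof -
  have fw: "f w > 0" using fpos w .
  have wM: "(1 / f w) *\<^sub>R w \<in> Ms" using fw by (simp add: Ms_def hom)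
  have "continuous_on Ms (\<lambda>y. inner w y)" by (intro continuous_intros)
  then obtain q where q: "q \<in> Ms" "\<forall>y\<in>Ms. inner w y \<le> inner w q"
    using continuous_attains_sup[OF Ms_compact] wM by blast
  have q0: "q \<noteq> 0" using Ms_nz q(1) .
  have fq: "f q = 1" using q by (simp add: Ms_def)
  have lin: "linear (L q)" using linL q0 .
  define lam where "lam = inner w q"
  have "inner w ((1 / f w) *\<^sub>R w) > 0" using fw w by simp
  then have lam: "lam > 0" using q(2) wM unfolding lam_def by force
  have k: "inner w u = 0" if u: "L q u = 0" for u
  proof -
    note cv = curve[OF q(1) u]
    from cv(1) obtain e where e: "e > 0"
      "\<forall>t\<in>{-e<..<e}. (1 / f (q + t *\<^sub>R u)) *\<^sub>R (q + t *\<^sub>R u) \<in> Ms \<and> q + t *\<^sub>R u \<noteq> 0"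
      by blast
    let ?c = "\<lambda>t. (1 / f (q + t *\<^sub>R u)) *\<^sub>R (q + t *\<^sub>R u)"
    have "((\<lambda>t. inner w (?c t)) has_real_derivative inner w u) (at 0)"
      unfolding has_real_derivative_iff_has_vector_derivative
      by (rule bounded_linear.has_vector_derivative[OF bounded_linear_inner_right cv(3)])
    moreover have "\<forall>y. \<bar>0 - y\<bar> < e \<longrightarrow> inner w (?c y) \<le> inner w (?c 0)"
    proof (intro allI impI)
      fix y :: real assume "\<bar>0 - y\<bar> < e"
      then have "?c y \<in> Ms" using e(2) by (auto simp: abs_less_iff)
      then have "inner w (?c y) \<le> inner w q" using q(2) by blast
      then show "inner w (?c y) \<le> inner w (?c 0)" by (simp only: cv(2))
    qed
    ultimately show ?thesis using DERIV_local_max e(1) by blast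
  qed
  define uu where "uu = w - lam *\<^sub>R grad q"
  have ig: "inner v (grad q) = L q v" for v
    by (metis inner_commute inner_grad q0)
  have "inner z uu = 0" for z
  proof -
    have Lz: "L q (z - L q z *\<^sub>R q) = 0"
      using linear_diff[OF lin] linear_cmul[OF lin] euler[OF q0] fq by simp
    have "inner z uu = inner (z - L q z *\<^sub>R q) uu + L q z * inner q uu"
      by (simp add: inner_diff_left)
    also have "inner (z - L q z *\<^sub>R q) uu = 0"
      unfolding uu_def inner_diff_right inner_scaleR_right
      using k[OF Lz] ig[of "z - L q z *\<^sub>R q"] Lz by (simp add: inner_commute)
    also have "inner q uu = 0"
      unfolding uu_def inner_diff_right inner_scaleR_right
      using ig[of q] euler[OF q0] fq by (simp add: lam_def inner_commute)
    finally show ?thesis by simp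
  qed
  then have "uu = 0" by (metis inner_eq_zero_iff)
  then have "w = lam *\<^sub>R grad q" by (simp add: uu_def)
  then show ?thesis using q(1) lam by blast
qed

lemma ray_hits:
  assumes z: "z \<noteq> 0"
  shows "\<exists>c>0. c *\<^sub>R z \<in> Mst"
proof -
  have "cJ z \<noteq> 0" using z by (simp add: cJ_def vec_eq_iff)
  then have "- cJ z \<noteq> 0" by simp
  from lagrange[OF this] obtain q c where q: "q \<in> Ms" "c > 0" "- cJ z = c *\<^sub>R grad q" by blast
  have "reeb Ms q = (1 / c) *\<^sub>R z"
  proof -
    have "grad q = (1 / c) *\<^sub>R (- cJ z)" using q by simp
    then have "cJ (grad q) = (1 / c) *\<^sub>R z" by (simp add: cJ_scale cJ_minus cJ_cJ)
    then show ?thesis using reeb_M[OF q(1)] by simp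
  qed
  then have "(1 / c) *\<^sub>R z \<in> Mst" using q(1) unfolding Mst_def by (intro image_eqI[OF sym])
  then show ?thesis using q(2) by (intro exI[of _ "1 / c"]) simp
qed

lemma main_gen:
  fixes fs :: "complex ^ 'd \<Rightarrow> real"
  assumes fs: "pos_hom1 fs" and eq: "{y. fs y = 1} = Mst" and z: "fs z > 0"
  shows "- (THE p. p \<in> Ms \<and> pos_prop (reeb Ms p) z) = reeb Mst ((1 / fs z) *\<^sub>R z)"
proof -
  define y0 where "y0 = (1 / fs z) *\<^sub>R z"
  have "fs y0 = 1" using fs z unfolding pos_hom1_def y0_def by simp
  then have "y0 \<in> Mst" using eq by blast
  then obtain p where p: "p \<in> Ms" "reeb Ms p = y0" unfolding Mst_def by auto
  have "(THE p. p \<in> Ms \<and> pos_prop (reeb Ms p) z) = p"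
  proof (rule the_equality)
    show "p \<in> Ms \<and> pos_prop (reeb Ms p) z"
      unfolding pos_prop_def using p z by (auto simp: y0_def intro!: exI[of _ "1 / fs z"])
  next
    fix p' assume p': "p' \<in> Ms \<and> pos_prop (reeb Ms p') z"
    then obtain c where c: "c > 0" "reeb Ms p' = c *\<^sub>R z" unfolding pos_prop_def by auto
    have "reeb Ms p' \<in> Mst" using p' unfolding Mst_def by auto
    then have "fs (c *\<^sub>R z) = 1" using eq c by auto
    then have "c * fs z = 1" using fs c unfolding pos_hom1_def by simp
    then have "c = 1 / fs z" using z by (simp add: field_simps)
    then have "reeb Ms p' = reeb Ms p" using c p by (simp add: y0_def)
    then have "reeb Mst (reeb Ms p') = reeb Mst (reeb Ms p)" by simp
    then show "p' = p" using reeb_star p(1) p' by simp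
  qed
  then show ?thesis using reeb_star[OF p(1)] p(2) by (simp add: y0_def)
qed

lemma fs_pos:
  fixes fs :: "complex ^ 'd \<Rightarrow> real"
  assumes fs: "pos_hom1 fs" and eq: "{y. fs y = 1} = Mst" and z: "z \<noteq> 0"
  shows "fs z > 0"
proof -
  obtain c where c: "c > 0" "c *\<^sub>R z \<in> Mst" using ray_hits[OF z] by blast
  then have "fs (c *\<^sub>R z) = 1" using eq by auto
  then have "c * fs z = 1" using fs c unfolding pos_hom1_def by simp
  then show ?thesis using c(1) by (metis zero_less_mult_pos zero_less_one)
qed

end

theorem lemma2p6:
  fixes f fs :: "complex ^ 'd \<Rightarrow> real" and M :: "(complex ^ 'd) set" and x :: "complex ^ 'd"
  assumes "qconvex_gauge f"
    and "M = {y. f y = 1}"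
    and "pos_hom1 fs"
    and "{y. fs y = 1} = reeb M ` M"
    and "f x > 1" and "fs x > 1"
  shows "- n_plus M x = reeb (reeb M ` M) ((1 / fs x) *\<^sub>R x)
    \<and> - n_minus M x = reeb (reeb M ` M) ((1 / fs (- x)) *\<^sub>R (- x))"
proof -
  interpret gauge f by unfold_locales (rule assms(1))
  have MM: "M = Ms" using assms(2) by (simp add: Ms_def)
  have eq: "{y. fs y = 1} = Mst" using assms(4) by (simp add: MM Mst_def)
  have "fs ((2::real) *\<^sub>R 0) = 2 * fs 0" using assms(3) unfolding pos_hom1_def by (meson zero_less_numeral)
  then have fs0: "fs 0 = 0" by simp
  have x0: "x \<noteq> 0" using assms(6) fs0 by auto
  have fsm: "fs (- x) > 0" using fs_pos[OF assms(3) eq] x0 by simp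
  have "- n_plus M x = reeb (reeb M ` M) ((1 / fs x) *\<^sub>R x)"
    unfolding n_plus_def MM Mst_def[symmetric]
    using main_gen[OF assms(3) eq] assms(6) by simp
  moreover have "- n_minus M x = reeb (reeb M ` M) ((1 / fs (- x)) *\<^sub>R (- x))"
    unfolding n_minus_def MM Mst_def[symmetric]
    using main_gen[OF assms(3) eq fsm] by simp
  ultimately show ?thesis by blast
qed


end
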